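(* Let $u\ge1$ be an integer, $H$ a graph with $\mathrm{dom}(H)\ge u$, and $\Delta\ge\omega\ge\omega_0(H^{\downarrow u})+u$. Let $G$ be a $\{K_u\vee I_{\Delta+1},K_{\omega+1}\}$-free graph such that every $u$-clique $c$ of $G$ with $c\subseteq\mathrm{Dom}(J)$ for some $J\in\mathcal{H}(G)$ satisfies $\omega(c)\ge\omega_0(H^{\downarrow u})+u$. Then \[\mathcal{N}(H,G)\le\frac{\mathcal{N}(H^{\downarrow u},\mathrm{T}_{\omega-u}(\Delta))\,k^u(G)}{\binom{\mathrm{dom}(H)}{u}}.\]
   Context: All graphs are finite and simple. $\mathcal{N}(H,G)$ is the number of (not necessarily induced) subgraphs of $G$ isomorphic to $H$, $\mathcal{H}(G)$ is the set of such subgraphs, and $k^u(G)$ is the number of $u$-cliques of $G$ (cliques identified with vertex sets). A graph is $\mathcal{F}$-free if it has no subgraph isomorphic to a member of $\mathcal{F}$. $K_u\vee I_{\Delta+1}$ is the complete split graph: a $u$-clique, an independent set of $\Delta+1$ vertices, and all edges between them. $\mathrm{T}_r(n)$ is the Turán graph (complete $r$-partite on $n$ vertices with part sizes $\lfloor n/r\rfloor$ or $\lceil n/r\rceil$). A dominating vertex of a graph $J$ is a vertex adjacent in $J$ to all other vertices of $J$; $\mathrm{Dom}(J)$ is their set and $\mathrm{dom}(J)=|\mathrm{Dom}(J)|$. $H^{\downarrow u}$ is $H$ with $u$ dominating vertices deleted. For a $u$-clique $c$ of $G$, $\omega(c)$ is the maximum size of a clique of $G$ containing $c$. For a graph $F$,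 $\omega_0(F)$ is the least positive integer such that for every integer $r\ge\omega_0(F)$ and every $n\ge1$, every $n$-vertex $K_{r+1}$-free graph $G'$ satisfies $\mathcal{N}(F,G')\le\mathcal{N}(F,\mathrm{T}_r(n))$ (it exists by a theorem of Morrison et al.). *)

theory Defs
  imports Complex_Main
begin

type_synonym 'a graph = "'a set \<times> 'a set set"

definition verts :: "'a graph \<Rightarrow> 'a set" where "verts G = fst G"
definition edges :: "'a graph \<Rightarrow> 'a set set" where "edges G = snd G"

definition wf_graph :: "'a graph \<Rightarrow> bool" where
  "wf_graph G \<longleftrightarrow> finite (verts G) \<and> (\<forall>e\<in>edges G. e \<subseteq> verts G \<and> card e = 2)"

definition subgraph :: "'a graph \<Rightarrow> 'a graph \<Rightarrow> bool" where
  "subgraph J G \<longleftrightarrow> wf_graph J \<and> verts J \<subseteq> verts G \<and> edges J \<subseteq> edges G"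

definition graph_iso :: "'a graph \<Rightarrow> 'b graph \<Rightarrow> bool" where
  "graph_iso G H \<longleftrightarrow> (\<exists>f. bij_betw f (verts G) (verts H) \<and>
      (\<forall>x\<in>verts G. \<forall>y\<in>verts G. {x, y} \<in> edges G \<longleftrightarrow> {f x, f y} \<in> edges H))"

definition copies :: "'b graph \<Rightarrow> 'a graph \<Rightarrow> 'a graph set" where
  "copies H G = {J. subgraph J G \<and> graph_iso J H}"

definition num_copies :: "'b graph \<Rightarrow> 'a graph \<Rightarrow> nat" where
  "num_copies H G = card (copies H G)"

definition free :: "'b graph set \<Rightarrow> 'a graph \<Rightarrow> bool" where
  "free Fs G \<longleftrightarrow> (\<forall>F\<in>Fs. copies F G = {})"

definition is_clique :: "'a graph \<Rightarrow> 'a set \<Rightarrow> bool" where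
  "is_clique G c \<longleftrightarrow> c \<subseteq> verts G \<and> (\<forall>x\<in>c. \<forall>y\<in>c. x \<noteq> y \<longrightarrow> {x, y} \<in> edges G)"

definition num_cliques :: "nat \<Rightarrow> 'a graph \<Rightarrow> nat" where
  "num_cliques u G = card {c. is_clique G c \<and> card c = u}"

definition clique_omega :: "'a graph \<Rightarrow> 'a set \<Rightarrow> nat" where
  "clique_omega G c = Max {card c' | c'. is_clique G c' \<and> c \<subseteq> c'}"

definition Dom :: "'a graph \<Rightarrow> 'a set" where
  "Dom J = {v \<in> verts J. \<forall>w\<in>verts J. w \<noteq> v \<longrightarrow> {v, w} \<in> edges J}"

definition dom_num :: "'a graph \<Rightarrow> nat" where
  "dom_num J = card (Dom J)"

definition induced :: "'a graph \<Rightarrow> 'a set \<Rightarrow> 'a graph" where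
  "induced G S = (S, {e \<in> edges G. e \<subseteq> S})"

text \<open>\<open>H^{\<down>u}\<close>: H with (some choice of) u dominating vertices deleted.
  (The result does not depend on the choice, up to isomorphism.)\<close>
definition del_dom :: "'a graph \<Rightarrow> nat \<Rightarrow> 'a graph" where
  "del_dom H u = (let D = (SOME D. D \<subseteq> Dom H \<and> card D = u) in induced H (verts H - D))"

definition complete_graph :: "nat \<Rightarrow> nat graph" where
  "complete_graph n = ({0..<n}, {{i, j} | i j. i < n \<and> j < n \<and> i \<noteq> j})"

definition complete_split :: "nat \<Rightarrow> nat \<Rightarrow> nat graph" where
  "complete_split u m = ({0..<u + m},
     {{i, j} | i j. i < u + m \<and> j < u + m \<and> i \<noteq> j \<and> (i < u \<or> j < u)})"

definition turan :: "nat \<Rightarrow> nat \<Rightarrow> nat graph" where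
  "turan r n = ({0..<n}, {{i, j} | i j. i < n \<and> j < n \<and> i mod r \<noteq> j mod r})"

text \<open>The property defining \<open>\<omega>_0(F)\<close> at threshold r0 (graphs on n vertices are
  represented on vertex type nat, which is no loss since \<open>\<N>\<close> is isomorphism-invariant).\<close>
definition omega0_prop :: "'b graph \<Rightarrow> nat \<Rightarrow> bool" where
  "omega0_prop F r0 \<longleftrightarrow> 0 < r0 \<and>
     (\<forall>r \<ge> r0. \<forall>n \<ge> 1. \<forall>G' :: nat graph.
        wf_graph G' \<and> card (verts G') = n \<and> free {complete_graph (r + 1)} G'
        \<longrightarrow> num_copies F G' \<le> num_copies F (turan r n))"

definition omega0 :: "'b graph \<Rightarrow> nat" where
  "omega0 F = (LEAST r0. omega0_prop F r0)"

end

theory Submission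
  imports Defs
begin


lemma graph_iso_trans:
  assumes "graph_iso A B" "graph_iso B C" shows "graph_iso A C"
proof -
  obtain f where f: "bij_betw f (verts A) (verts B)"
    "\<forall>x\<in>verts A. \<forall>y\<in>verts A. {x, y} \<in> edges A \<longleftrightarrow> {f x, f y} \<in> edges B"
    using assms(1) unfolding graph_iso_def by blast
  obtain g where g: "bij_betw g (verts B) (verts C)"
    "\<forall>x\<in>verts B. \<forall>y\<in>verts B. {x, y} \<in> edges B \<longleftrightarrow> {g x, g y} \<in> edges C"
    using assms(2) unfolding graph_iso_def by blast
  have "bij_betw (g \<circ> f) (verts A) (verts C)" using f(1) g(1) by (rule bij_betw_trans)
  moreover have "\<forall>x\<in>verts A. \<forall>y\<in>verts A. {x, y} \<in> edges A \<longleftrightarrow> {(g\<circ>f) x, (g\<circ>f) y} \<in> edges C"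
  proof (intro ballI)
    fix x y assume xy: "x \<in> verts A" "y \<in> verts A"
    have "f x \<in> verts B" "f y \<in> verts B" using xy f(1) by (auto simp: bij_betw_def)
    then show "{x, y} \<in> edges A \<longleftrightarrow> {(g\<circ>f) x, (g\<circ>f) y} \<in> edges C"
      using f(2) g(2) xy by simp
  qed
  ultimately show ?thesis unfolding graph_iso_def by blast
qed

lemma graph_iso_sym:
  assumes "graph_iso A B" shows "graph_iso B A"
proof -
  obtain f where f: "bij_betw f (verts A) (verts B)"
    "\<forall>x\<in>verts A. \<forall>y\<in>verts A. {x, y} \<in> edges A \<longleftrightarrow> {f x, f y} \<in> edges B"
    using assms(1) unfolding graph_iso_def by blast
  define g where "g = inv_into (verts A) f"
  have g: "bij_betw g (verts B) (verts A)" using f(1) bij_betw_inv_into g_def by blast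
  have "\<forall>x\<in>verts B. \<forall>y\<in>verts B. {x, y} \<in> edges B \<longleftrightarrow> {g x, g y} \<in> edges A"
  proof (intro ballI)
    fix x y assume xy: "x \<in> verts B" "y \<in> verts B"
    have gx: "g x \<in> verts A" "f (g x) = x" using xy f(1) g unfolding g_def
      by (auto simp: bij_betw_def f_inv_into_f inv_into_into)
    have gy: "g y \<in> verts A" "f (g y) = y" using xy f(1) g unfolding g_def
      by (auto simp: bij_betw_def f_inv_into_f inv_into_into)
    show "{x, y} \<in> edges B \<longleftrightarrow> {g x, g y} \<in> edges A" using f(2)[rule_format, OF gx(1) gy(1)] gx(2) gy(2) by simp
  qed
  then show ?thesis using g unfolding graph_iso_def by blast
qed

definition img :: "('a \<Rightarrow> 'c) \<Rightarrow> 'a graph \<Rightarrow> 'c graph" where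
  "img \<phi> J = (\<phi> ` verts J, (\<lambda>e. \<phi> ` e) ` edges J)"

lemma verts_img[simp]: "verts (img \<phi> J) = \<phi> ` verts J" by (simp add: img_def verts_def)
lemma edges_img[simp]: "edges (img \<phi> J) = (\<lambda>e. \<phi> ` e) ` edges J" by (simp add: img_def edges_def)

lemma wf_edge: "wf_graph J \<Longrightarrow> e \<in> edges J \<Longrightarrow> \<exists>x y. x \<in> verts J \<and> y \<in> verts J \<and> x \<noteq> y \<and> e = {x, y}"
proof -
  assume "wf_graph J" "e \<in> edges J"
  then have a: "e \<subseteq> verts J" "card e = 2" unfolding wf_graph_def by auto
  then obtain x y where "e = {x,y}" "x \<noteq> y" by (auto simp: card_2_iff)
  then show ?thesis using a by auto
qed

lemma iso_img:
  assumes "wf_graph J" "inj_on \<phi> (verts J)"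
  shows "graph_iso J (img \<phi> J)" "wf_graph (img \<phi> J)"
proof -
  have "bij_betw \<phi> (verts J) (verts (img \<phi> J))" using assms(2) by (simp add: bij_betw_def)
  moreover have "\<forall>x\<in>verts J. \<forall>y\<in>verts J. {x, y} \<in> edges J \<longleftrightarrow> {\<phi> x, \<phi> y} \<in> edges (img \<phi> J)"
  proof (intro ballI iffI)
    fix x y assume "x \<in> verts J" "y \<in> verts J" "{x, y} \<in> edges J"
    then show "{\<phi> x, \<phi> y} \<in> edges (img \<phi> J)" unfolding edges_img
      by (intro image_eqI[where x="{x,y}"]) auto
  next
    fix x y assume xy: "x \<in> verts J" "y \<in> verts J" "{\<phi> x, \<phi> y} \<in> edges (img \<phi> J)"
    then obtain e where e: "e \<in> edges J" "\<phi> ` e = \<phi> ` {x, y}" by auto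
    have s1: "e \<subseteq> verts J" using e assms(1) unfolding wf_graph_def by blast
    have s2: "{x,y} \<subseteq> verts J" using xy by simp
    have "e = {x, y}" using inj_on_image_eq_iff[OF assms(2) s1 s2] e(2) by simp
    then show "{x, y} \<in> edges J" using e by simp
  qed
  ultimately show "graph_iso J (img \<phi> J)" unfolding graph_iso_def by blast
  show "wf_graph (img \<phi> J)" unfolding wf_graph_def
  proof (rule conjI[OF _ ballI])
    show "finite (verts (img \<phi> J))" using assms(1) by (simp add: wf_graph_def)
  next
    fix e assume "e \<in> edges (img \<phi> J)"
    then obtain e0 where e0: "e0 \<in> edges J" "e = \<phi> ` e0" by auto
    then obtain x y where xy: "x \<in> verts J" "y \<in> verts J" "x \<noteq> y" "e = \<phi> ` {x, y}"
      using wf_edge[OF assms(1) e0(1)] by auto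
    have "\<phi> x \<noteq> \<phi> y" using assms(2) xy by (meson inj_onD)
    then show "e \<subseteq> verts (img \<phi> J) \<and> card e = 2" using xy by auto
  qed
qed

lemma finite_copies: "wf_graph G \<Longrightarrow> finite (copies F G)"
proof -
  assume w: "wf_graph G"
  have fe: "finite (edges G)" using w unfolding wf_graph_def
    by (meson PowI finite_Pow_iff finite_subset subsetI)
  have "copies F G \<subseteq> Pow (verts G) \<times> Pow (edges G)"
  proof
    fix J assume "J \<in> copies F G"
    then have "verts J \<subseteq> verts G" "edges J \<subseteq> edges G" by (simp_all add: copies_def subgraph_def)
    then show "J \<in> Pow (verts G) \<times> Pow (edges G)" by (cases J) (simp add: verts_def edges_def)
  qed
  moreover have "finite (Pow (verts G) \<times> Pow (edges G))" using fe w by (simp add: wf_graph_def)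
  ultimately show ?thesis by (rule finite_subset)
qed

lemma copies_emb:
  assumes w2: "wf_graph G2" and inj: "inj_on \<phi> (verts G1)" and sub: "\<phi> ` verts G1 \<subseteq> verts G2"
    and ed: "\<forall>x\<in>verts G1. \<forall>y\<in>verts G1. {x, y} \<in> edges G1 \<longrightarrow> {\<phi> x, \<phi> y} \<in> edges G2"
  shows "card (copies F G1) \<le> card (copies F G2)" "copies F G1 \<noteq> {} \<Longrightarrow> copies F G2 \<noteq> {}"
proof -
  have mem: "img \<phi> J \<in> copies F G2" if J: "J \<in> copies F G1" for J
  proof -
    have sJ: "subgraph J G1" "graph_iso J F" using J unfolding copies_def by auto
    have wJ: "wf_graph J" using sJ unfolding subgraph_def by auto
    have iJ: "inj_on \<phi> (verts J)" using inj sJ unfolding subgraph_def by (meson inj_on_subset)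
    have "subgraph (img \<phi> J) G2" unfolding subgraph_def
    proof (intro conjI)
      show "wf_graph (img \<phi> J)" using iso_img[OF wJ iJ] by simp
      show "verts (img \<phi> J) \<subseteq> verts G2" using sJ sub unfolding subgraph_def by auto
      show "edges (img \<phi> J) \<subseteq> edges G2"
      proof
        fix e assume "e \<in> edges (img \<phi> J)"
        then obtain e0 where e0: "e0 \<in> edges J" "e = \<phi> ` e0" by auto
        then obtain x y where "x \<in> verts J" "y \<in> verts J" "{x,y} \<in> edges J" "e = \<phi> ` {x, y}"
          using wf_edge[OF wJ e0(1)] by auto
        then show "e \<in> edges G2" using ed sJ unfolding subgraph_def by auto
      qed
    qed
    moreover have "graph_iso (img \<phi> J) F"
      using graph_iso_trans[OF graph_iso_sym[OF iso_img(1)[OF wJ iJ]] sJ(2)] .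
    ultimately show ?thesis unfolding copies_def by simp
  qed
  have injm: "inj_on (img \<phi>) (copies F G1)"
  proof
    fix J1 J2 assume J: "J1 \<in> copies F G1" "J2 \<in> copies F G1" and eq: "img \<phi> J1 = img \<phi> J2"
    have s: "verts J1 \<subseteq> verts G1" "verts J2 \<subseteq> verts G1" "wf_graph J1" "wf_graph J2"
      using J unfolding copies_def subgraph_def by auto
    have "verts (img \<phi> J1) = verts (img \<phi> J2)" using eq by simp
    then have v: "verts J1 = verts J2" using inj_on_image_eq_iff[OF inj s(1,2)] by simp
    have ie: "inj_on (\<lambda>e. \<phi> ` e) (Pow (verts G1))"
      by (rule inj_onI) (simp add: inj_on_image_eq_iff[OF inj])
    have p1: "edges J1 \<subseteq> Pow (verts G1)" and p2: "edges J2 \<subseteq> Pow (verts G1)"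
      using s unfolding wf_graph_def by blast+
    have "(\<lambda>e. \<phi> ` e) ` edges J1 = (\<lambda>e. \<phi> ` e) ` edges J2"
      using arg_cong[OF eq, of edges] by simp
    then have "edges J1 = edges J2" using inj_on_image_eq_iff[OF ie p1 p2] by simp
    then show "J1 = J2" using v by (simp add: verts_def edges_def prod_eq_iff)
  qed
  show "card (copies F G1) \<le> card (copies F G2)"
  proof (rule card_inj_on_le[OF injm _ finite_copies[OF w2]])
    show "img \<phi> ` copies F G1 \<subseteq> copies F G2" using mem by blast
  qed
  show "copies F G1 \<noteq> {} \<Longrightarrow> copies F G2 \<noteq> {}" using mem by fastforce
qed



lemma verts_induced[simp]: "verts (induced G S) = S" by (simp add: induced_def verts_def)
lemma edges_induced[simp]: "edges (induced G S) = {e \<in> edges G. e \<subseteq> S}" by (simp add: induced_def edges_def)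

lemma iso_Dom:
  assumes f: "bij_betw f (verts J) (verts H)"
    and e: "\<forall>x\<in>verts J. \<forall>y\<in>verts J. {x, y} \<in> edges J \<longleftrightarrow> {f x, f y} \<in> edges H"
    and x: "x \<in> verts J"
  shows "x \<in> Dom J \<longleftrightarrow> f x \<in> Dom H"
proof
  assume d: "x \<in> Dom J"
  have "f x \<in> verts H" using f x by (auto simp: bij_betw_def)
  moreover have "{f x, w} \<in> edges H" if w: "w \<in> verts H" "w \<noteq> f x" for w
  proof -
    obtain w0 where w0: "w0 \<in> verts J" "w = f w0" using w f by (auto simp: bij_betw_def)
    then have "w0 \<noteq> x" using w by auto
    then have "{x, w0} \<in> edges J" using d w0 by (auto simp: Dom_def)
    then show ?thesis using e x w0 by auto
  qed
  ultimately show "f x \<in> Dom H" by (auto simp: Dom_def)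
next
  assume d: "f x \<in> Dom H"
  have "{x, w} \<in> edges J" if w: "w \<in> verts J" "w \<noteq> x" for w
  proof -
    have "f w \<noteq> f x" using f w x by (auto simp: bij_betw_def inj_on_def)
    moreover have "f w \<in> verts H" using f w by (auto simp: bij_betw_def)
    ultimately have "{f x, f w} \<in> edges H" using d by (auto simp: Dom_def)
    then show ?thesis using e x w by auto
  qed
  then show "x \<in> Dom J" using x by (auto simp: Dom_def)
qed

lemma Dom_sub: "Dom J \<subseteq> verts J" by (auto simp: Dom_def)

lemma iso_induced:
  assumes f: "bij_betw f (verts J) (verts H)"
    and e: "\<forall>x\<in>verts J. \<forall>y\<in>verts J. {x, y} \<in> edges J \<longleftrightarrow> {f x, f y} \<in> edges H"
    and S: "S \<subseteq> verts J"
  shows "graph_iso (induced J S) (induced H (f ` S))"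
  unfolding graph_iso_def
proof (intro exI conjI)
  show "bij_betw f (verts (induced J S)) (verts (induced H (f ` S)))"
    using f S by (auto simp: bij_betw_def intro: inj_on_subset)
  show "\<forall>x\<in>verts (induced J S). \<forall>y\<in>verts (induced J S).
     {x, y} \<in> edges (induced J S) \<longleftrightarrow> {f x, f y} \<in> edges (induced H (f ` S))"
    using e S by auto
qed

lemma swap_iso:
  assumes w: "wf_graph H" and D1: "D1 \<subseteq> Dom H" and D2: "D2 \<subseteq> Dom H" and c: "card D1 = card D2"
  shows "graph_iso (induced H (verts H - D1)) (induced H (verts H - D2))"
proof -
  have fin: "finite (Dom H)" using finite_subset[OF Dom_sub] w unfolding wf_graph_def by blast
  have "card (Dom H - D1) = card (Dom H - D2)"
    using c D1 D2 fin by (simp add: card_Diff_subset finite_subset[OF D1 fin] finite_subset[OF D2 fin])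
  then obtain g where g: "bij_betw g (Dom H - D1) (Dom H - D2)"
    using finite_same_card_bij[OF finite_Diff[OF fin] finite_Diff[OF fin]] by blast
  define h where "h x = (if x \<in> Dom H then g x else x)" for x
  have b1: "bij_betw h (verts H - Dom H) (verts H - Dom H)"
  proof -
    have "bij_betw h (verts H - Dom H) (verts H - Dom H) = bij_betw id (verts H - Dom H) (verts H - Dom H)"
      by (rule bij_betw_cong) (simp add: h_def)
    then show ?thesis by simp
  qed
  have b2: "bij_betw h (Dom H - D1) (Dom H - D2)"
  proof -
    have "bij_betw h (Dom H - D1) (Dom H - D2) = bij_betw g (Dom H - D1) (Dom H - D2)"
      by (rule bij_betw_cong) (simp add: h_def)
    then show ?thesis using g by simp
  qed
  have bb: "bij_betw h ((verts H - Dom H) \<union> (Dom H - D1)) ((verts H - Dom H) \<union> (Dom H - D2))"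
    by (rule bij_betw_combine[OF b1 b2]) blast
  have ds: "Dom H \<subseteq> verts H" by (rule Dom_sub)
  have e1: "(verts H - Dom H) \<union> (Dom H - D1) = verts H - D1" using D1 ds by auto
  have e2: "(verts H - Dom H) \<union> (Dom H - D2) = verts H - D2" using D2 ds by auto
  have b: "bij_betw h (verts H - D1) (verts H - D2)" using bb unfolding e1 e2 .
  have hD: "h x \<in> Dom H \<longleftrightarrow> x \<in> Dom H" if "x \<in> verts H - D1" for x
  proof (cases "x \<in> Dom H")
    case True
    then have "x \<in> Dom H - D1" using that by blast
    then have "g x \<in> Dom H - D2" using g by (meson bij_betwE)
    then show ?thesis using True by (simp add: h_def)
  next
    case False
    then show ?thesis by (simp add: h_def)
  qed
  have ed: "{x, y} \<in> edges H \<longleftrightarrow> {h x, h y} \<in> edges H" if xy: "x \<in> verts H - D1" "y \<in> verts H - D1" for x y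
  proof (cases "x = y")
    case True
    have "{z} \<notin> edges H" for z
    proof
      assume "{z} \<in> edges H"
      then have "card {z} = 2" using w unfolding wf_graph_def by blast
      then show False by simp
    qed
    then show ?thesis using True by simp
  next
    case False
    have hxy: "h x \<noteq> h y" "h x \<in> verts H" "h y \<in> verts H" using b xy False by (auto simp: bij_betw_def inj_on_def)
    show ?thesis
    proof (cases "x \<in> Dom H \<or> y \<in> Dom H")
      case True
      then have "h x \<in> Dom H \<or> h y \<in> Dom H" using hD xy by blast
      have de: "{a, b} \<in> edges H" if "a \<in> Dom H \<or> b \<in> Dom H" "a \<in> verts H" "b \<in> verts H" "a \<noteq> b" for a b
      proof (cases "a \<in> Dom H")
        case True then show ?thesis using that unfolding Dom_def by auto
      next
        case False
        then have "{b, a} \<in> edges H" using that unfolding Dom_def by auto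
        then show ?thesis by (simp add: insert_commute)
      qed
      then have "{h x, h y} \<in> edges H" using hxy \<open>h x \<in> Dom H \<or> h y \<in> Dom H\<close> by blast
      moreover have "{x, y} \<in> edges H" using de True xy False by blast
      ultimately show ?thesis by simp
    next
      case F: False
      then show ?thesis unfolding h_def by simp
    qed
  qed
  show ?thesis unfolding graph_iso_def
  proof (intro exI conjI)
    show "bij_betw h (verts (induced H (verts H - D1))) (verts (induced H (verts H - D2)))" using b by simp
    show "\<forall>x\<in>verts (induced H (verts H - D1)). \<forall>y\<in>verts (induced H (verts H - D1)).
       {x, y} \<in> edges (induced H (verts H - D1)) \<longleftrightarrow> {h x, h y} \<in> edges (induced H (verts H - D2))"
    proof (intro ballI)
      fix x y assume xy: "x \<in> verts (induced H (verts H - D1))" "y \<in> verts (induced H (verts H - D1))"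
      then have hh: "h x \<in> verts H - D2" "h y \<in> verts H - D2" using b by (auto simp: bij_betw_def)
      have xy': "x \<in> verts H - D1" "y \<in> verts H - D1" using xy by auto
      show "{x, y} \<in> edges (induced H (verts H - D1)) \<longleftrightarrow> {h x, h y} \<in> edges (induced H (verts H - D2))"
        using ed[OF xy'] xy' hh by simp
    qed
  qed
qed

lemma del_dom_ex:
  assumes w: "wf_graph H" and u: "dom_num H \<ge> u"
  shows "\<exists>D. D \<subseteq> Dom H \<and> card D = u \<and> del_dom H u = induced H (verts H - D)"
proof -
  have fin: "finite (Dom H)" using w Dom_sub unfolding wf_graph_def by (metis finite_subset)
  have ex: "\<exists>D. D \<subseteq> Dom H \<and> card D = u"
    using u obtain_subset_with_card_n unfolding dom_num_def by metis
  define D where "D = (SOME D. D \<subseteq> Dom H \<and> card D = u)"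
  have "D \<subseteq> Dom H \<and> card D = u" unfolding D_def by (rule someI_ex[OF ex])
  moreover have "del_dom H u = induced H (verts H - D)" unfolding del_dom_def D_def Let_def ..
  ultimately show ?thesis by blast
qed



lemma wf_induced: "wf_graph G \<Longrightarrow> S \<subseteq> verts G \<Longrightarrow> wf_graph (induced G S)"
  unfolding wf_graph_def by (auto intro: finite_subset)

lemma self_copy: "wf_graph G \<Longrightarrow> G \<in> copies G G"
proof -
  assume w: "wf_graph G"
  have "graph_iso G G" unfolding graph_iso_def by (rule exI[of _ id]) simp
  then show ?thesis using w unfolding copies_def subgraph_def by simp
qed

lemma wf_complete: "wf_graph (complete_graph n)"
  unfolding wf_graph_def complete_graph_def verts_def edges_def by auto

lemma wf_split: "wf_graph (complete_split u m)"
  unfolding wf_graph_def complete_split_def verts_def edges_def by auto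

lemma wf_turan: "wf_graph (turan r n)"
  unfolding wf_graph_def turan_def verts_def edges_def by (auto simp: card_2_iff)

lemma verts_complete[simp]: "verts (complete_graph n) = {0..<n}"
  by (simp add: complete_graph_def verts_def)
lemma edges_complete: "e \<in> edges (complete_graph n) \<longleftrightarrow> (\<exists>i j. e = {i, j} \<and> i < n \<and> j < n \<and> i \<noteq> j)"
  by (simp add: complete_graph_def edges_def)
lemma verts_split[simp]: "verts (complete_split u m) = {0..<u+m}"
  by (simp add: complete_split_def verts_def)
lemma edges_split: "e \<in> edges (complete_split u m) \<longleftrightarrow>
   (\<exists>i j. e = {i, j} \<and> i < u + m \<and> j < u + m \<and> i \<noteq> j \<and> (i < u \<or> j < u))"
  by (simp add: complete_split_def edges_def)
lemma verts_turan[simp]: "verts (turan r n) = {0..<n}"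
  by (simp add: turan_def verts_def)
lemma edges_turan: "e \<in> edges (turan r n) \<longleftrightarrow> (\<exists>i j. e = {i, j} \<and> i < n \<and> j < n \<and> i mod r \<noteq> j mod r)"
  by (simp add: turan_def edges_def)

lemma clique_copy:
  assumes w: "wf_graph G" and K: "is_clique G K" "finite K"
  shows "copies (complete_graph (card K)) G \<noteq> {}"
proof -
  obtain \<phi> where \<phi>: "bij_betw \<phi> {0..<card K} K" using ex_bij_betw_nat_finite[OF K(2)] by blast
  have "copies (complete_graph (card K)) (complete_graph (card K)) \<noteq> {}"
    using self_copy[OF wf_complete] by blast
  moreover have "copies (complete_graph (card K)) (complete_graph (card K)) \<noteq> {} \<Longrightarrow>
      copies (complete_graph (card K)) G \<noteq> {}"
  proof (rule copies_emb(2)[OF w])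
    show "inj_on \<phi> (verts (complete_graph (card K)))" using \<phi> by (simp add: bij_betw_def)
    show "\<phi> ` verts (complete_graph (card K)) \<subseteq> verts G" using \<phi> K(1)
      by (simp add: bij_betw_def is_clique_def)
    show "\<forall>x\<in>verts (complete_graph (card K)). \<forall>y\<in>verts (complete_graph (card K)).
       {x, y} \<in> edges (complete_graph (card K)) \<longrightarrow> {\<phi> x, \<phi> y} \<in> edges G"
    proof (intro ballI impI)
      fix x y assume xy: "x \<in> verts (complete_graph (card K))" "y \<in> verts (complete_graph (card K))"
        "{x, y} \<in> edges (complete_graph (card K))"
      then have "x \<noteq> y" by (auto simp: edges_complete doubleton_eq_iff)
      then have "\<phi> x \<noteq> \<phi> y" using \<phi> xy by (auto simp: bij_betw_def inj_on_def)
      moreover have "\<phi> x \<in> K" "\<phi> y \<in> K" using \<phi> xy by (auto simp: bij_betw_def)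
      ultimately show "{\<phi> x, \<phi> y} \<in> edges G" using K(1) unfolding is_clique_def by blast
    qed
  qed
  ultimately show ?thesis by blast
qed

lemma copy_clique:
  assumes J: "J \<in> copies (complete_graph m) G"
  shows "is_clique G (verts J)" "card (verts J) = m"
proof -
  have s: "subgraph J G" and i: "graph_iso J (complete_graph m)" using J unfolding copies_def by auto
  obtain f where f: "bij_betw f (verts J) {0..<m}"
    "\<forall>x\<in>verts J. \<forall>y\<in>verts J. {x, y} \<in> edges J \<longleftrightarrow> {f x, f y} \<in> edges (complete_graph m)"
    using i unfolding graph_iso_def by auto
  show "card (verts J) = m" using bij_betw_same_card[OF f(1)] by simp
  show "is_clique G (verts J)" unfolding is_clique_def
  proof (intro conjI ballI impI)
    show "verts J \<subseteq> verts G" using s unfolding subgraph_def by blast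
  next
    fix x y assume xy: "x \<in> verts J" "y \<in> verts J" "x \<noteq> y"
    then have "f x \<noteq> f y" "f x < m" "f y < m" using f(1) by (auto simp: bij_betw_def inj_on_def)
    then have "{f x, f y} \<in> edges (complete_graph m)" unfolding edges_complete by blast
    then have "{x, y} \<in> edges J" using f(2) xy by blast
    then show "{x, y} \<in> edges G" using s unfolding subgraph_def by blast
  qed
qed

definition Nb :: "'a graph \<Rightarrow> 'a set \<Rightarrow> 'a set" where
  "Nb G c = {v \<in> verts G. v \<notin> c \<and> (\<forall>x\<in>c. {x, v} \<in> edges G)}"

lemma split_copy:
  assumes w: "wf_graph G" and c: "is_clique G c" "card c = u" "finite c"
    and S: "S \<subseteq> Nb G c" "card S = m" "finite S"
  shows "copies (complete_split u m) G \<noteq> {}"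
proof -
  obtain g1 where g1: "bij_betw g1 {0..<u} c" using ex_bij_betw_nat_finite[OF c(3)] c(2) by blast
  obtain g2 where g2: "bij_betw g2 {0..<m} S" using ex_bij_betw_nat_finite[OF S(3)] S(2) by blast
  define \<phi> where "\<phi> i = (if i < u then g1 i else g2 (i - u))" for i
  have \<phi>c: "\<phi> i \<in> c" if "i < u" for i using that g1 by (auto simp: \<phi>_def bij_betw_def)
  have \<phi>S: "\<phi> i \<in> S" if "u \<le> i" "i < u + m" for i using that g2 by (auto simp: \<phi>_def bij_betw_def)
  have cS: "c \<inter> S = {}" using S(1) unfolding Nb_def by blast
  have inj: "inj_on \<phi> {0..<u+m}"
  proof (rule inj_onI)
    fix i j assume ij: "i \<in> {0..<u+m}" "j \<in> {0..<u+m}" "\<phi> i = \<phi> j"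
    show "i = j"
    proof (cases "i < u")
      case True
      show ?thesis
      proof (cases "j < u")
        case True
        then have "g1 i = g1 j" using \<open>i < u\<close> ij(3) by (simp add: \<phi>_def)
        moreover have "inj_on g1 {0..<u}" using g1 by (simp add: bij_betw_def)
        ultimately show ?thesis using \<open>i < u\<close> True by (simp add: inj_on_def)
      next
        case False
        have "\<phi> i \<in> c" using \<phi>c \<open>i < u\<close> by blast
        moreover have "\<phi> j \<in> S" using \<phi>S[of j] False ij(2) by simp
        ultimately have "\<phi> i \<in> c \<inter> S" using ij(3) by simp
        then show ?thesis using cS by simp
      qed
    next
      case False
      show ?thesis
      proof (cases "j < u")
        case True
        have "\<phi> j \<in> c" using \<phi>c True by blast
        moreover have "\<phi> i \<in> S" using \<phi>S[of i] \<open>\<not> i < u\<close> ij(1) by simp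
        ultimately have "\<phi> i \<in> c \<inter> S" using ij(3) by simp
        then show ?thesis using cS by simp
      next
        case False
        then have "i - u \<in> {0..<m}" "j - u \<in> {0..<m}" "g2 (i - u) = g2 (j - u)"
          using \<open>\<not> i < u\<close> False ij by (auto simp: \<phi>_def)
        moreover have "inj_on g2 {0..<m}" using g2 by (simp add: bij_betw_def)
        ultimately have "i - u = j - u" by (meson inj_onD)
        then show ?thesis using False \<open>\<not> i < u\<close> by simp
      qed
    qed
  qed
  have inG: "c \<subseteq> verts G" "S \<subseteq> verts G" using c(1) S(1) unfolding is_clique_def Nb_def by auto
  have "copies (complete_split u m) (complete_split u m) \<noteq> {}"
    using self_copy[OF wf_split] by blast
  moreover have "copies (complete_split u m) (complete_split u m) \<noteq> {} \<Longrightarrow>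
      copies (complete_split u m) G \<noteq> {}"
  proof (rule copies_emb(2)[OF w])
    show "inj_on \<phi> (verts (complete_split u m))" using inj by simp
    show "\<phi> ` verts (complete_split u m) \<subseteq> verts G"
    proof
      fix y assume "y \<in> \<phi> ` verts (complete_split u m)"
      then obtain i where i: "i < u + m" "y = \<phi> i" by auto
      show "y \<in> verts G"
      proof (cases "i < u")
        case True then show ?thesis using i \<phi>c inG by blast
      next
        case False then show ?thesis using i \<phi>S inG by (meson not_less subsetD)
      qed
    qed
    have edge1: "{\<phi> i, \<phi> j} \<in> edges G" if ij: "i < u" "j < u + m" "i \<noteq> j" for i j
    proof (cases "j < u")
      case True
      have ii: "i \<in> {0..<u+m}" "j \<in> {0..<u+m}" using ij by auto
      have ne: "\<phi> i \<noteq> \<phi> j"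
      proof
        assume "\<phi> i = \<phi> j"
        then have "i = j" using inj_onD[OF inj _ ii] by simp
        then show False using ij(3) by simp
      qed
      have "\<phi> i \<in> c" "\<phi> j \<in> c" using \<phi>c ij(1) True by auto
      then show ?thesis using c(1) ne unfolding is_clique_def by blast
    next
      case False
      then have "\<phi> j \<in> Nb G c" using \<phi>S ij S(1) by auto
      then show ?thesis using \<phi>c[OF ij(1)] unfolding Nb_def by blast
    qed
    show "\<forall>x\<in>verts (complete_split u m). \<forall>y\<in>verts (complete_split u m).
       {x, y} \<in> edges (complete_split u m) \<longrightarrow> {\<phi> x, \<phi> y} \<in> edges G"
    proof (intro ballI impI)
      fix x y assume xy: "x \<in> verts (complete_split u m)" "y \<in> verts (complete_split u m)"
        "{x, y} \<in> edges (complete_split u m)"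
      then obtain i j where ij: "{x, y} = {i, j}" "i < u + m" "j < u + m" "i \<noteq> j" "i < u \<or> j < u"
        unfolding edges_split by blast
      have "{\<phi> i, \<phi> j} \<in> edges G"
      proof (cases "i < u")
        case True show ?thesis by (rule edge1[OF True ij(3) ij(4)])
      next
        case False
        then have ju: "j < u" using ij(5) by simp
        have "j \<noteq> i" using ij(4) by simp
        then have "{\<phi> j, \<phi> i} \<in> edges G" using edge1[OF ju ij(2)] by simp
        then show ?thesis by (simp add: insert_commute)
      qed
      moreover have "\<phi> ` {x, y} = \<phi> ` {i, j}" using ij(1) by simp
      then have "{\<phi> x, \<phi> y} = {\<phi> i, \<phi> j}" by simp
      ultimately show "{\<phi> x, \<phi> y} \<in> edges G" by simp
    qed
  qed
  ultimately show ?thesis by blast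
qed



lemma edge_transfer:
  assumes w1: "wf_graph J1" and v: "verts J1 = verts J2" and cD: "c \<subseteq> Dom J2"
    and inner: "{e \<in> edges J1. e \<subseteq> verts J1 - c} \<subseteq> edges J2"
  shows "edges J1 \<subseteq> edges J2"
proof
  fix e assume e: "e \<in> edges J1"
  obtain x y where xy: "x \<in> verts J1" "y \<in> verts J1" "x \<noteq> y" "e = {x, y}"
    using wf_edge[OF w1 e] by blast
  show "e \<in> edges J2"
  proof (cases "x \<in> c")
    case True
    then have "x \<in> Dom J2" using cD by blast
    moreover have "y \<in> verts J2" "y \<noteq> x" using xy v by auto
    ultimately have "{x, y} \<in> edges J2" unfolding Dom_def by blast
    then show ?thesis using xy(4) by simp
  next
    case False
    show ?thesis
    proof (cases "y \<in> c")
      case True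
      then have "y \<in> Dom J2" using cD by blast
      moreover have "x \<in> verts J2" "x \<noteq> y" using xy v by auto
      ultimately have "{y, x} \<in> edges J2" unfolding Dom_def by blast
      then show ?thesis using xy(4) by (simp add: insert_commute)
    next
      case F2: False
      have "e \<subseteq> verts J1 - c" using xy False F2 by simp
      then show ?thesis using inner e by blast
    qed
  qed
qed

lemma inj_count:
  assumes wG: "wf_graph G" and wH: "wf_graph H" and u: "dom_num H \<ge> u" and cu: "card c = u"
  shows "card {J \<in> copies H G. c \<subseteq> Dom J} \<le> card (copies (del_dom H u) (induced G (Nb G c)))"
proof -
  define m where "m J = induced J (verts J - c)" for J :: "'a graph"
  have NbG: "Nb G c \<subseteq> verts G" unfolding Nb_def by blast
  obtain D where D: "D \<subseteq> Dom H" "card D = u" "del_dom H u = induced H (verts H - D)"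
    using del_dom_ex[OF wH u] by blast
  have mem: "m J \<in> copies (del_dom H u) (induced G (Nb G c))" if J: "J \<in> copies H G" "c \<subseteq> Dom J" for J
  proof -
    have s: "subgraph J G" and i: "graph_iso J H" using J unfolding copies_def by auto
    have wJ: "wf_graph J" and vJ: "verts J \<subseteq> verts G" and eJ: "edges J \<subseteq> edges G"
      using s unfolding subgraph_def by auto
    have cJ: "c \<subseteq> verts J" using J(2) Dom_sub[of J] by (rule subset_trans)
    have sub1: "verts J - c \<subseteq> Nb G c"
    proof
      fix v assume v: "v \<in> verts J - c"
      have "{x, v} \<in> edges G" if x: "x \<in> c" for x
      proof -
        have "x \<in> Dom J" using x J(2) by blast
        moreover have "v \<noteq> x" using v x by blast
        ultimately have "{x, v} \<in> edges J" using v unfolding Dom_def by blast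
        then show ?thesis using eJ by blast
      qed
      then show "v \<in> Nb G c" using v vJ unfolding Nb_def by blast
    qed
    have "subgraph (m J) (induced G (Nb G c))" unfolding subgraph_def m_def
    proof (intro conjI)
      show "wf_graph (induced J (verts J - c))" using wf_induced[OF wJ] by blast
      show "verts (induced J (verts J - c)) \<subseteq> verts (induced G (Nb G c))" using sub1 by simp
      show "edges (induced J (verts J - c)) \<subseteq> edges (induced G (Nb G c))" using sub1 eJ by auto
    qed
    moreover have "graph_iso (m J) (del_dom H u)"
    proof -
      obtain f where f: "bij_betw f (verts J) (verts H)"
        "\<forall>x\<in>verts J. \<forall>y\<in>verts J. {x, y} \<in> edges J \<longleftrightarrow> {f x, f y} \<in> edges H"
        using i unfolding graph_iso_def by blast
      have injf: "inj_on f (verts J)" using f(1) by (simp add: bij_betw_def)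
      have i1: "graph_iso (m J) (induced H (f ` (verts J - c)))"
        unfolding m_def by (rule iso_induced[OF f]) blast
      have "f ` (verts J - c) = f ` verts J - f ` c" using injf cJ by (simp add: inj_on_image_set_diff)
      also have "\<dots> = verts H - f ` c" using f(1) by (simp add: bij_betw_def)
      finally have e1: "f ` (verts J - c) = verts H - f ` c" .
      have fc: "f ` c \<subseteq> Dom H"
      proof
        fix y assume "y \<in> f ` c"
        then obtain x where x: "x \<in> c" "y = f x" by blast
        then have "x \<in> Dom J" "x \<in> verts J" using J(2) cJ by blast+
        then show "y \<in> Dom H" using iso_Dom[OF f] x(2) by blast
      qed
      have "card (f ` c) = card c" using card_image[OF inj_on_subset[OF injf cJ]] .
      then have cc: "card (f ` c) = card D" using cu D(2) by simp
      have i2: "graph_iso (induced H (verts H - f ` c)) (induced H (verts H - D))"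
        by (rule swap_iso[OF wH fc D(1) cc])
      have "graph_iso (m J) (induced H (verts H - f ` c))" using i1 e1 by simp
      then show ?thesis using graph_iso_trans[OF _ i2] D(3) by simp
    qed
    ultimately show ?thesis unfolding copies_def by simp
  qed
  have injm: "inj_on m {J \<in> copies H G. c \<subseteq> Dom J}"
  proof (rule inj_onI)
    fix J1 J2 assume J1: "J1 \<in> {J \<in> copies H G. c \<subseteq> Dom J}" and J2: "J2 \<in> {J \<in> copies H G. c \<subseteq> Dom J}"
      and eq: "m J1 = m J2"
    have w1: "wf_graph J1" and w2: "wf_graph J2" using J1 J2 unfolding copies_def subgraph_def by auto
    have c1: "c \<subseteq> Dom J1" and c2: "c \<subseteq> Dom J2" using J1 J2 by auto
    have c1v: "c \<subseteq> verts J1" using c1 Dom_sub[of J1] by (rule subset_trans)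
    have c2v: "c \<subseteq> verts J2" using c2 Dom_sub[of J2] by (rule subset_trans)
    have "verts (m J1) = verts (m J2)" using eq by simp
    then have d: "verts J1 - c = verts J2 - c" unfolding m_def by simp
    have v: "verts J1 = verts J2"
    proof -
      have "verts J1 = (verts J1 - c) \<union> c" using c1v by blast
      also have "\<dots> = (verts J2 - c) \<union> c" using d by simp
      also have "\<dots> = verts J2" using c2v by blast
      finally show ?thesis .
    qed
    have ee: "edges (m J1) = edges (m J2)" using eq by simp
    then have ee': "{e \<in> edges J1. e \<subseteq> verts J1 - c} = {e \<in> edges J2. e \<subseteq> verts J2 - c}"
      unfolding m_def by simp
    have "edges J1 \<subseteq> edges J2"
      by (rule edge_transfer[OF w1 v c2]) (use ee' in blast)
    moreover have "edges J2 \<subseteq> edges J1"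
      by (rule edge_transfer[OF w2 v[symmetric] c1]) (use ee' in blast)
    ultimately have "edges J1 = edges J2" by blast
    then show "J1 = J2" using v by (simp add: verts_def edges_def prod_eq_iff)
  qed
  have fin: "finite (copies (del_dom H u) (induced G (Nb G c)))"
    by (rule finite_copies[OF wf_induced[OF wG NbG]])
  show ?thesis
    by (rule card_inj_on_le[OF injm _ fin]) (use mem in blast)
qed



lemma turan_mono: "n \<le> N \<Longrightarrow> card (copies F (turan r n)) \<le> card (copies F (turan r N))"
proof (rule copies_emb(1)[OF wf_turan, of id])
  assume nN: "n \<le> N"
  show "inj_on id (verts (turan r n))" by simp
  show "id ` verts (turan r n) \<subseteq> verts (turan r N)" using nN by auto
  show "\<forall>x\<in>verts (turan r n). \<forall>y\<in>verts (turan r n). {x, y} \<in> edges (turan r n) \<longrightarrow> {id x, id y} \<in> edges (turan r N)"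
  proof (intro ballI impI)
    fix x y assume "{x, y} \<in> edges (turan r n)"
    then obtain i j where "{x, y} = {i, j}" "i < n" "j < n" "i mod r \<noteq> j mod r" unfolding edges_turan by blast
    then have "\<exists>i j. {x, y} = {i, j} \<and> i < N \<and> j < N \<and> i mod r \<noteq> j mod r" using nN
      by (intro exI[of _ i] exI[of _ j]) simp
    then show "{id x, id y} \<in> edges (turan r N)" unfolding edges_turan by simp
  qed
qed

lemma bound:
  fixes G :: "'a graph" and F :: "'b graph"
  assumes wG: "wf_graph G" and N: "N \<subseteq> verts G" and cN: "card N \<le> \<Delta>"
    and fr: "copies (complete_graph (r + 1)) (induced G N) = {}"
    and op: "omega0_prop F r0" and rr: "r0 \<le> r"
  shows "card (copies F (induced G N)) \<le> num_copies F (turan r \<Delta>)"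
proof (cases "N = {}")
  case True
  show ?thesis unfolding num_copies_def
  proof (rule copies_emb(1)[OF wf_turan, of "\<lambda>_. 0"])
    show "inj_on (\<lambda>_. 0) (verts (induced G N))" using True by simp
    show "(\<lambda>_. 0) ` verts (induced G N) \<subseteq> verts (turan r \<Delta>)" using True by simp
    show "\<forall>x\<in>verts (induced G N). \<forall>y\<in>verts (induced G N). {x, y} \<in> edges (induced G N) \<longrightarrow> {0, 0} \<in> edges (turan r \<Delta>)"
      using True by simp
  qed
next
  case False
  have fN: "finite N" using N wG unfolding wf_graph_def by (blast intro: finite_subset)
  define n where "n = card N"
  have n1: "n \<ge> 1" using False fN unfolding n_def by (simp add: Suc_le_eq card_gt_0_iff)
  obtain \<phi> where \<phi>: "bij_betw \<phi> N {0..<n}" using ex_bij_betw_finite_nat[OF fN] unfolding n_def by blast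
  have inj: "inj_on \<phi> N" and im: "\<phi> ` N = {0..<n}" using \<phi> by (auto simp: bij_betw_def)
  define G' where "G' = img \<phi> (induced G N)"
  have wI: "wf_graph (induced G N)" by (rule wf_induced[OF wG N])
  have injI: "inj_on \<phi> (verts (induced G N))" using inj by simp
  have wG': "wf_graph G'" unfolding G'_def by (rule iso_img(2)[OF wI injI])
  have vG': "verts G' = {0..<n}" unfolding G'_def using im by simp
  have c1: "card (copies F (induced G N)) \<le> card (copies F G')"
  proof (rule copies_emb(1)[OF wG' injI])
    show "\<phi> ` verts (induced G N) \<subseteq> verts G'" unfolding G'_def by simp
    show "\<forall>x\<in>verts (induced G N). \<forall>y\<in>verts (induced G N). {x, y} \<in> edges (induced G N) \<longrightarrow> {\<phi> x, \<phi> y} \<in> edges G'"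
    proof (intro ballI impI)
      fix x y assume "{x, y} \<in> edges (induced G N)"
      then show "{\<phi> x, \<phi> y} \<in> edges G'" unfolding G'_def edges_img
        by (intro image_eqI[where x="{x,y}"]) simp_all
    qed
  qed
  define \<psi> where "\<psi> = inv_into N \<phi>"
  have frG': "copies (complete_graph (r + 1)) G' = {}"
  proof (rule ccontr)
    assume ne: "copies (complete_graph (r + 1)) G' \<noteq> {}"
    have "copies (complete_graph (r + 1)) (induced G N) \<noteq> {}"
    proof (rule copies_emb(2)[OF wI _ _ _ ne])
      show "inj_on \<psi> (verts G')" unfolding \<psi>_def G'_def by (simp add: inj_on_inv_into)
      have canc: "\<psi> ` \<phi> ` S = S" if "S \<subseteq> N" for S
        unfolding \<psi>_def using inv_into_image_cancel[OF inj that] .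
      show "\<psi> ` verts G' \<subseteq> verts (induced G N)" unfolding G'_def using canc[of N] by simp
      show "\<forall>x\<in>verts G'. \<forall>y\<in>verts G'. {x, y} \<in> edges G' \<longrightarrow> {\<psi> x, \<psi> y} \<in> edges (induced G N)"
      proof (intro ballI impI)
        fix x y assume "{x, y} \<in> edges G'"
        then obtain e where e: "e \<in> edges (induced G N)" "{x, y} = \<phi> ` e" unfolding G'_def edges_img by blast
        have eN: "e \<subseteq> N" using e(1) by simp
        have "{\<psi> x, \<psi> y} = \<psi> ` {x, y}" by simp
        also have "\<dots> = \<psi> ` \<phi> ` e" using e(2) by simp
        also have "\<dots> = e" using canc[OF eN] .
        finally show "{\<psi> x, \<psi> y} \<in> edges (induced G N)" using e(1) by simp
      qed
    qed
    then show False using fr by simp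
  qed
  have "free {complete_graph (r + 1)} G'" unfolding free_def using frG' by simp
  moreover have "card (verts G') = n" using vG' by simp
  ultimately have c2: "num_copies F G' \<le> num_copies F (turan r n)"
    using op rr n1 wG' unfolding omega0_prop_def by blast
  have c3: "num_copies F (turan r n) \<le> num_copies F (turan r \<Delta>)"
    unfolding num_copies_def by (rule turan_mono) (use cN n_def in simp)
  show ?thesis using c1 c2 c3 unfolding num_copies_def by linarith
qed



lemma card_filter_sum: "finite X \<Longrightarrow> card {x \<in> X. P x} = (\<Sum>x\<in>X. if P x then 1 else 0::nat)"
proof -
  assume fin: "finite X"
  have "card {x \<in> X. P x} = (\<Sum>x\<in>{x \<in> X. P x}. 1)" by simp
  also have "\<dots> = (\<Sum>x\<in>X. if P x then 1 else 0)" by (rule sum.inter_filter[OF fin])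
  finally show ?thesis .
qed

lemma dom_num_iso: "graph_iso J H \<Longrightarrow> dom_num J = dom_num H"
proof -
  assume "graph_iso J H"
  then obtain f where f: "bij_betw f (verts J) (verts H)"
    "\<forall>x\<in>verts J. \<forall>y\<in>verts J. {x, y} \<in> edges J \<longleftrightarrow> {f x, f y} \<in> edges H"
    unfolding graph_iso_def by blast
  have injf: "inj_on f (verts J)" and im: "f ` verts J = verts H" using f(1) by (auto simp: bij_betw_def)
  have "f ` Dom J = Dom H"
  proof
    show "f ` Dom J \<subseteq> Dom H"
    proof
      fix y assume "y \<in> f ` Dom J"
      then obtain x where x: "x \<in> Dom J" "y = f x" by blast
      have "x \<in> verts J" using Dom_sub[of J] x(1) by (rule subsetD)
      then show "y \<in> Dom H" using iso_Dom[OF f \<open>x \<in> verts J\<close>] x by simp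
    qed
    show "Dom H \<subseteq> f ` Dom J"
    proof
      fix y assume y: "y \<in> Dom H"
      have "y \<in> verts H" using Dom_sub[of H] y by (rule subsetD)
      then obtain x where x: "x \<in> verts J" "y = f x" using im by blast
      then have "x \<in> Dom J" using iso_Dom[OF f x(1)] y x(2) by simp
      then show "y \<in> f ` Dom J" using x(2) by blast
    qed
  qed
  moreover have "inj_on f (Dom J)" using injf Dom_sub[of J] by (rule inj_on_subset)
  then have "card (f ` Dom J) = card (Dom J)" by (rule card_image)
  ultimately show ?thesis unfolding dom_num_def by simp
qed



theorem mainTheorem18:
  fixes H :: "'b graph" and G :: "'a graph" and u \<Delta> \<omega> :: nat
  assumes "wf_graph H" and "wf_graph G"
    and "u \<ge> 1"
    and "dom_num H \<ge> u"
    and morrison: "\<exists>r0. omega0_prop (del_dom H u) r0"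
    and "\<Delta> \<ge> \<omega>"
    and "\<omega> \<ge> omega0 (del_dom H u) + u"
    and "free {complete_split u (\<Delta> + 1), complete_graph (\<omega> + 1)} G"
    and "\<forall>c. is_clique G c \<and> card c = u \<and> (\<exists>J\<in>copies H G. c \<subseteq> Dom J)
            \<longrightarrow> clique_omega G c \<ge> omega0 (del_dom H u) + u"
  shows "real (num_copies H G)
           \<le> real (num_copies (del_dom H u) (turan (\<omega> - u) \<Delta>)) * real (num_cliques u G)
             / real (dom_num H choose u)"
  proof -
  note wH = assms(1) and wG = assms(2) and u1 = assms(3) and du = assms(4) and om = assms(7)
  define F where "F = del_dom H u"
  define r where "r = \<omega> - u"
  define T where "T = num_copies F (turan r \<Delta>)"
  define C where "C = {c. is_clique G c \<and> card c = u}"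
  define A where "A = copies H G"
  define ch where "ch = dom_num H choose u"
  have op: "omega0_prop F (omega0 F)" unfolding omega0_def F_def by (rule LeastI_ex[OF morrison])
  have rr: "omega0 F \<le> r" using om unfolding r_def F_def by simp
  have r1: "r + 1 + u = \<omega> + 1" using om unfolding r_def by simp
  have frS: "copies (complete_split u (\<Delta> + 1)) G = {}" and frK: "copies (complete_graph (\<omega> + 1)) G = {}"
    using assms(8) unfolding free_def by simp_all
  have per: "card {J \<in> A. c \<subseteq> Dom J} \<le> T" if c: "c \<in> C" for c
  proof -
    have cc: "is_clique G c" "card c = u" using c unfolding C_def by auto
    have fc: "finite c"
    proof (rule ccontr)
      assume "infinite c" then have "card c = 0" by simp
      then show False using cc(2) u1 by simp
    qed
    have NbG: "Nb G c \<subseteq> verts G" unfolding Nb_def by blast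
    have fNb: "finite (Nb G c)" using wG NbG unfolding wf_graph_def by (blast intro: finite_subset)
    have cN: "card (Nb G c) \<le> \<Delta>"
    proof (rule ccontr)
      assume "\<not> card (Nb G c) \<le> \<Delta>"
      then have "\<Delta> + 1 \<le> card (Nb G c)" by simp
      then obtain S where S: "S \<subseteq> Nb G c" "card S = \<Delta> + 1" "finite S"
        by (rule obtain_subset_with_card_n)
      have "copies (complete_split u (\<Delta> + 1)) G \<noteq> {}"
        by (rule split_copy[OF wG cc fc S])
      then show False using frS by simp
    qed
    have frN: "copies (complete_graph (r + 1)) (induced G (Nb G c)) = {}"
    proof (rule ccontr)
      assume "copies (complete_graph (r + 1)) (induced G (Nb G c)) \<noteq> {}"
      then obtain J where J: "J \<in> copies (complete_graph (r + 1)) (induced G (Nb G c))" by blast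
      define K where "K = verts J"
      have K1: "is_clique (induced G (Nb G c)) K" and K2: "card K = r + 1"
        using copy_clique[OF J] unfolding K_def by auto
      have KN: "K \<subseteq> Nb G c" using K1 unfolding is_clique_def by simp
      have fK: "finite K"
      proof (rule ccontr)
        assume "infinite K" then have "card K = 0" by simp
        then show False using K2 by simp
      qed
      have disj: "c \<inter> K = {}" using KN unfolding Nb_def by blast
      have cl: "is_clique G (c \<union> K)" unfolding is_clique_def
      proof (intro conjI ballI impI)
        show "c \<union> K \<subseteq> verts G" using cc(1) KN NbG unfolding is_clique_def by blast
      next
        fix x y assume xy: "x \<in> c \<union> K" "y \<in> c \<union> K" "x \<noteq> y"
        show "{x, y} \<in> edges G"
        proof (cases "x \<in> c")
          case True
          show ?thesis
          proof (cases "y \<in> c")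
            case True
            then show ?thesis using \<open>x \<in> c\<close> xy(3) cc(1) unfolding is_clique_def by blast
          next
            case False
            then have "y \<in> Nb G c" using xy(2) KN by blast
            then show ?thesis using \<open>x \<in> c\<close> unfolding Nb_def by blast
          qed
        next
          case False
          then have xK: "x \<in> K" using xy(1) by blast
          show ?thesis
          proof (cases "y \<in> c")
            case True
            have "x \<in> Nb G c" using xK KN by blast
            then have "{y, x} \<in> edges G" using True unfolding Nb_def by blast
            then show ?thesis by (simp add: insert_commute)
          next
            case False
            then have "y \<in> K" using xy(2) by blast
            then have "{x, y} \<in> edges (induced G (Nb G c))" using xK xy(3) K1 unfolding is_clique_def by blast
            then show ?thesis by simp
          qed
        qed
      qed
      have "card (c \<union> K) = \<omega> + 1" using card_Un_disjoint[OF fc fK disj] cc(2) K2 r1 by simp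
      then have "copies (complete_graph (\<omega> + 1)) G \<noteq> {}"
        using clique_copy[OF wG cl] fc fK by simp
      then show False using frK by simp
    qed
    have "card {J \<in> A. c \<subseteq> Dom J} \<le> card (copies F (induced G (Nb G c)))"
      unfolding A_def F_def by (rule inj_count[OF wG wH du cc(2)])
    also have "\<dots> \<le> T" unfolding T_def by (rule bound[OF wG NbG cN frN op rr])
    finally show ?thesis .
  qed
  have finA: "finite A" unfolding A_def by (rule finite_copies[OF wG])
  have finC: "finite C"
  proof (rule finite_subset)
    show "C \<subseteq> Pow (verts G)" unfolding C_def is_clique_def by blast
    show "finite (Pow (verts G))" using wG unfolding wf_graph_def by simp
  qed
  have perJ: "card {c \<in> C. c \<subseteq> Dom J} = ch" if J: "J \<in> A" for J
  proof -
    have s: "subgraph J G" and i: "graph_iso J H" using J unfolding A_def copies_def by auto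
    have wJ: "wf_graph J" and vJ: "verts J \<subseteq> verts G" and eJ: "edges J \<subseteq> edges G"
      using s unfolding subgraph_def by auto
    have DJ: "Dom J \<subseteq> verts J" by (rule Dom_sub)
    have fD: "finite (Dom J)" using wJ DJ unfolding wf_graph_def by (blast intro: finite_subset)
    have eq: "{c \<in> C. c \<subseteq> Dom J} = {B. B \<subseteq> Dom J \<and> card B = u}"
    proof (intro set_eqI iffI)
      fix B assume "B \<in> {c \<in> C. c \<subseteq> Dom J}"
      then show "B \<in> {B. B \<subseteq> Dom J \<and> card B = u}" unfolding C_def by simp
    next
      fix B assume B: "B \<in> {B. B \<subseteq> Dom J \<and> card B = u}"
      then have BD: "B \<subseteq> Dom J" and Bc: "card B = u" by auto
      have "is_clique G B" unfolding is_clique_def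
      proof (intro conjI ballI impI)
        show "B \<subseteq> verts G" using BD DJ vJ by blast
      next
        fix x y assume xy: "x \<in> B" "y \<in> B" "x \<noteq> y"
        have "x \<in> Dom J" "y \<in> verts J" using xy BD DJ by blast+
        then have "{x, y} \<in> edges J" using xy(3) unfolding Dom_def by auto
        then show "{x, y} \<in> edges G" using eJ by blast
      qed
      then show "B \<in> {c \<in> C. c \<subseteq> Dom J}" unfolding C_def using BD Bc by simp
    qed
    have "card {B. B \<subseteq> Dom J \<and> card B = u} = card (Dom J) choose u" by (rule n_subsets[OF fD])
    also have "card (Dom J) = dom_num H" using dom_num_iso[OF i] unfolding dom_num_def .
    finally show ?thesis unfolding eq ch_def .
  qed
  have "card A * ch = (\<Sum>J\<in>A. card {c \<in> C. c \<subseteq> Dom J})" using perJ by simp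
  also have "\<dots> = (\<Sum>J\<in>A. \<Sum>c\<in>C. if c \<subseteq> Dom J then 1 else 0)"
    using card_filter_sum[OF finC] by simp
  also have "\<dots> = (\<Sum>c\<in>C. \<Sum>J\<in>A. if c \<subseteq> Dom J then 1 else 0)" by (rule sum.swap)
  also have "\<dots> = (\<Sum>c\<in>C. card {J \<in> A. c \<subseteq> Dom J})"
    using card_filter_sum[OF finA] by simp
  also have "\<dots> \<le> (\<Sum>c\<in>C. T)" using per by (rule sum_mono)
  also have "\<dots> = T * card C" by simp
  finally have key: "card A * ch \<le> T * card C" .
  then have keyr: "real (card A) * real ch \<le> real T * real (card C)"
    by (metis of_nat_le_iff of_nat_mult)
  have chp: "real ch > 0" unfolding ch_def using du by simp
  have "real (card A) \<le> real T * real (card C) / real ch"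
    using keyr chp by (simp add: pos_le_divide_eq)
  then show ?thesis unfolding A_def T_def C_def ch_def F_def r_def num_copies_def num_cliques_def .
qed

end
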